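(* Let $n\ge 2$ and $d\ge 2$. For every biseparable state $\rho$ on $(\mathbb{C}^d)^{\otimes n}$, $$\mathcal{C}_{\frac{n}{2}+1}(\rho)=\sum_{\alpha\neq\emptyset,\ |\alpha|\ge \frac n2+1}\|\tau_\alpha(\rho)\|^2\le d^n-d.$$
   Context: Consider $n$ qudits with Hilbert space $(\mathbb{C}^d)^{\otimes n}$. Let $\lambda_0=\mathbb{1}_d$ and let $\lambda_1,\dots,\lambda_{d^2-1}$ be Hermitian traceless $d\times d$ matrices normalized so that $\mathrm{Tr}[\lambda_i\lambda_j]=d\,\delta_{ij}$. For a nonempty subset $\alpha\subseteq\{1,\dots,n\}$ and a state $\rho$ with reduced state $\rho_\alpha$, define $\|\tau_\alpha(\rho)\|^2=\sum_{(i_k)_{k\in\alpha}\in\{1,\dots,d^2-1\}^{\alpha}}\big(\mathrm{Tr}[\rho_\alpha\bigotimes_{k\in\alpha}\lambda_{i_k}]\big)^2$. For real $x$, $\mathcal{C}_x(\rho)=\sum_{\alpha\neq\emptyset,\ |\alpha|\ge x}\|\tau_\alpha(\rho)\|^2$. A state is biseparable if it is a convex combination of pure states each of which is a product $|\phi\rangle_\beta\otimes|\chi\rangle_{\overline{\beta}}$ for some bipartition $\{1,\dots,n\}=\beta\,\dot\cup\,\overline\beta$ into nonempty sets (the bipartition may differ between terms). *)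

theory Defs
  imports Complex_Main "HOL-Library.FuncSet"
begin

text \<open>Computational basis of (C^d)^{tensor S} for a set S of qudit sites:
  extensional functions S -> {0..d-1}.  Sites of the n-qudit system are {..<n}.\<close>
type_synonym cfg = "nat \<Rightarrow> nat"

definition configs :: "nat \<Rightarrow> nat set \<Rightarrow> cfg set" where
  "configs d S = PiE S (\<lambda>_. {..<d})"

text \<open>Operators on (C^d)^{tensor S} are matrices indexed by configurations;
  a d x d matrix is a function nat => nat => complex read on {..<d}.\<close>
type_synonym op = "cfg \<Rightarrow> cfg \<Rightarrow> complex"
type_synonym lmat = "nat \<Rightarrow> nat \<Rightarrow> complex"

definition local_basis :: "nat \<Rightarrow> (nat \<Rightarrow> lmat) \<Rightarrow> bool" where
  "local_basis d lam \<longleftrightarrow>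
     (\<forall>i\<in>{1..<d^2}. \<forall>a<d. \<forall>b<d. lam i a b = cnj (lam i b a)) \<and>
     (\<forall>i\<in>{1..<d^2}. (\<Sum>a<d. lam i a a) = 0) \<and>
     (\<forall>i\<in>{1..<d^2}. \<forall>j\<in>{1..<d^2}.
        (\<Sum>a<d. \<Sum>b<d. lam i a b * lam j b a) = (if i = j then of_nat d else 0))"

definition glue :: "nat set \<Rightarrow> cfg \<Rightarrow> cfg \<Rightarrow> cfg" where
  "glue \<alpha> x z = (\<lambda>k. if k \<in> \<alpha> then x k else z k)"

definition reduced :: "nat \<Rightarrow> nat \<Rightarrow> op \<Rightarrow> nat set \<Rightarrow> op" where
  "reduced d n \<rho> \<alpha> = (\<lambda>x y. \<Sum>z\<in>configs d ({..<n} - \<alpha>). \<rho> (glue \<alpha> x z) (glue \<alpha> y z))"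

definition tensor_op :: "(nat \<Rightarrow> lmat) \<Rightarrow> nat set \<Rightarrow> (nat \<Rightarrow> nat) \<Rightarrow> op" where
  "tensor_op lam \<alpha> i = (\<lambda>x y. \<Prod>k\<in>\<alpha>. lam (i k) (x k) (y k))"

definition trace_prod :: "nat \<Rightarrow> nat set \<Rightarrow> op \<Rightarrow> op \<Rightarrow> complex" where
  "trace_prod d S A B = (\<Sum>x\<in>configs d S. \<Sum>y\<in>configs d S. A x y * B y x)"

text \<open>||tau_alpha(rho)||^2.  The traces are real (Hermitian operators); we square
  their real part.\<close>
definition tau_sq :: "nat \<Rightarrow> nat \<Rightarrow> (nat \<Rightarrow> lmat) \<Rightarrow> op \<Rightarrow> nat set \<Rightarrow> real" where
  "tau_sq d n lam \<rho> \<alpha> =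
     (\<Sum>i\<in>PiE \<alpha> (\<lambda>_. {1..<d^2}).
        (Re (trace_prod d \<alpha> (reduced d n \<rho> \<alpha>) (tensor_op lam \<alpha> i)))^2)"

definition corr_C :: "nat \<Rightarrow> nat \<Rightarrow> (nat \<Rightarrow> lmat) \<Rightarrow> real \<Rightarrow> op \<Rightarrow> real" where
  "corr_C d n lam t \<rho> =
     (\<Sum>\<alpha>\<in>{\<alpha>. \<alpha> \<subseteq> {..<n} \<and> \<alpha> \<noteq> {} \<and> real (card \<alpha>) \<ge> t}. tau_sq d n lam \<rho> \<alpha>)"

definition biseparable :: "nat \<Rightarrow> nat \<Rightarrow> op \<Rightarrow> bool" where
  "biseparable d n \<rho> \<longleftrightarrow>
     (\<exists>(m::nat) (p::nat \<Rightarrow> real) (\<psi>::nat \<Rightarrow> cfg \<Rightarrow> complex) (\<beta>::nat \<Rightarrow> nat set)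
        (\<phi>::nat \<Rightarrow> cfg \<Rightarrow> complex) (\<chi>::nat \<Rightarrow> cfg \<Rightarrow> complex).
        (\<forall>j<m. p j \<ge> 0) \<and> (\<Sum>j<m. p j) = 1 \<and>
        (\<forall>j<m. (\<Sum>x\<in>configs d {..<n}. (cmod (\<psi> j x))^2) = 1) \<and>
        (\<forall>j<m. \<beta> j \<subseteq> {..<n} \<and> \<beta> j \<noteq> {} \<and> \<beta> j \<noteq> {..<n} \<and>
           (\<forall>x\<in>configs d {..<n}.
              \<psi> j x = \<phi> j (restrict x (\<beta> j)) * \<chi> j (restrict x ({..<n} - \<beta> j)))) \<and>
        (\<forall>x\<in>configs d {..<n}. \<forall>y\<in>configs d {..<n}.
           \<rho> x y = (\<Sum>j<m. complex_of_real (p j) * \<psi> j x * cnj (\<psi> j y))))"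

end

theory Submission
  imports Defs
begin

lemma configs_finite[simp]: "finite S \<Longrightarrow> finite (configs d S)"
  unfolding configs_def by (simp add: finite_PiE)

lemma glue_in:
  assumes "a \<in> configs d G" "b \<in> configs d (S - G)" "G \<subseteq> S"
  shows "glue G a b \<in> configs d S"
  using assms unfolding configs_def glue_def PiE_def Pi_def extensional_def by auto

lemma restrict_glue1: "a \<in> configs d G \<Longrightarrow> restrict (glue G a b) G = a"
  unfolding configs_def glue_def PiE_def extensional_def by auto

lemma restrict_glue2: "b \<in> configs d (S - G) \<Longrightarrow> restrict (glue G a b) (S - G) = b"
  unfolding configs_def glue_def PiE_def extensional_def by auto

lemma glue_restrict: "G \<subseteq> S \<Longrightarrow> x \<in> configs d S \<Longrightarrow> glue G (restrict x G) (restrict x (S - G)) = x"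
  unfolding configs_def glue_def PiE_def extensional_def by auto


lemma sum_split:
  assumes "G \<subseteq> S" "finite S"
  shows "(\<Sum>x\<in>configs d S. f x) = (\<Sum>a\<in>configs d G. \<Sum>b\<in>configs d (S - G). f (glue G a b))"
proof -
  have bij: "bij_betw (\<lambda>(a,b). glue G a b) (configs d G \<times> configs d (S - G)) (configs d S)"
  proof (rule bij_betwI[where g="\<lambda>x. (restrict x G, restrict x (S - G))"])
    show "(\<lambda>(a, b). glue G a b) \<in> configs d G \<times> configs d (S - G) \<rightarrow> configs d S"
      using glue_in assms by auto
    show "(\<lambda>x. (restrict x G, restrict x (S - G))) \<in> configs d S \<rightarrow> configs d G \<times> configs d (S - G)"
      using assms unfolding configs_def by auto
    show "\<And>x. x \<in> configs d G \<times> configs d (S - G) \<Longrightarrow>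
         (restrict (case x of (a, b) \<Rightarrow> glue G a b) G, restrict (case x of (a, b) \<Rightarrow> glue G a b) (S - G)) = x"
      using restrict_glue1 restrict_glue2 by auto
    show "\<And>y. y \<in> configs d S \<Longrightarrow> (case (restrict y G, restrict y (S - G)) of (a, b) \<Rightarrow> glue G a b) = y"
      using glue_restrict assms by auto
  qed
  have "(\<Sum>x\<in>configs d S. f x) = (\<Sum>p\<in>configs d G \<times> configs d (S - G). f (case p of (a,b) \<Rightarrow> glue G a b))"
    using sum.reindex_bij_betw[OF bij, of f] by simp
  also have "\<dots> = (\<Sum>a\<in>configs d G. \<Sum>b\<in>configs d (S - G). f (glue G a b))"
    by (simp only: sum.cartesian_product) (rule sum.cong, auto)
  finally show ?thesis .
qed

definition lamx :: "(nat \<Rightarrow> lmat) \<Rightarrow> nat \<Rightarrow> lmat" where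
  "lamx lam j a b = (if j = 0 then (if a = b then 1 else 0) else lam j a b)"

definition ext :: "nat set \<Rightarrow> (nat \<Rightarrow> nat) \<Rightarrow> nat \<Rightarrow> nat" where
  "ext \<alpha> i k = (if k \<in> \<alpha> then i k else 0)"

definition EE :: "(nat \<Rightarrow> lmat) \<Rightarrow> nat set \<Rightarrow> (nat \<Rightarrow> nat) \<Rightarrow> op" where
  "EE lam S j x y = (\<Prod>k\<in>S. lamx lam (j k) (x k) (y k))"

definition Tf :: "nat \<Rightarrow> nat \<Rightarrow> (nat \<Rightarrow> lmat) \<Rightarrow> op \<Rightarrow> nat set \<Rightarrow> (nat \<Rightarrow> nat) \<Rightarrow> complex" where
  "Tf d n lam \<rho> \<alpha> i = (\<Sum>x\<in>configs d {..<n}. \<Sum>y\<in>configs d {..<n}. \<rho> x y * EE lam {..<n} (ext \<alpha> i) y x)"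

lemma delta_prod:
  assumes "finite T" "b \<in> configs d T" "b' \<in> configs d T"
  shows "(\<Prod>k\<in>T. (if b' k = b k then 1 else 0::complex)) = (if b' = b then 1 else 0)"
proof (cases "b' = b")
  case True thus ?thesis by simp
next
  case False
  then obtain k where "b' k \<noteq> b k" by auto
  moreover have "k \<in> T" using assms(2,3) \<open>b' k \<noteq> b k\<close> unfolding configs_def PiE_def extensional_def
    by fastforce
  ultimately show ?thesis using False assms(1) by auto
qed

lemma EE_split:
  assumes "G \<subseteq> S" "finite S"
  shows "EE lam S j (glue G a' b') (glue G a b) = EE lam G j a' a * EE lam (S - G) j b' b"
proof -
  have "EE lam S j (glue G a' b') (glue G a b) =
     (\<Prod>k\<in>S - G. lamx lam (j k) (glue G a' b' k) (glue G a b k)) * (\<Prod>k\<in>G. lamx lam (j k) (glue G a' b' k) (glue G a b k))"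
    unfolding EE_def using prod.subset_diff[OF assms] by blast
  also have "\<dots> = EE lam (S - G) j b' b * EE lam G j a' a"
    unfolding EE_def glue_def by (intro arg_cong2[where f="(*)"] prod.cong) auto
  finally show ?thesis by (simp add: mult.commute)
qed

lemma sum_configs_prod:
  assumes "finite S"
  shows "(\<Sum>x\<in>configs d S. \<Prod>k\<in>S. f k (x k)) = (\<Prod>k\<in>S. \<Sum>c<d. (f k c :: complex))"
  unfolding configs_def using prod_sum_PiE[OF assms, of "\<lambda>_. {..<d}" f] by simp

lemma lb_herm:
  assumes "local_basis d lam" "j < d^2" "a < d" "b < d"
  shows "cnj (lamx lam j b a) = lamx lam j a b"
proof (cases "j = 0")
  case True thus ?thesis unfolding lamx_def by auto
next
  case False
  then have "j \<in> {1..<d^2}" using assms by auto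
  then have "lam j a b = cnj (lam j b a)" using assms unfolding local_basis_def by blast
  then show ?thesis using False unfolding lamx_def by simp
qed

lemma lb_trace:
  assumes "local_basis d lam" "j < d^2" "j \<noteq> 0"
  shows "(\<Sum>c<d. lamx lam j c c) = 0"
proof -
  have "j \<in> {1..<d^2}" using assms by auto
  then have "(\<Sum>c<d. lam j c c) = 0" using assms(1) unfolding local_basis_def by blast
  then show ?thesis using assms(3) unfolding lamx_def by simp
qed

lemma local_orth:
  assumes lb: "local_basis d lam" and j: "j < d^2" and j': "j' < d^2"
  shows "(\<Sum>a<d. \<Sum>b<d. cnj (lamx lam j b a) * lamx lam j' b a) = (if j = j' then of_nat d else 0)"
proof -
  have "(\<Sum>a<d. \<Sum>b<d. cnj (lamx lam j b a) * lamx lam j' b a) = (\<Sum>a<d. \<Sum>b<d. lamx lam j a b * lamx lam j' b a)"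
    using lb_herm[OF lb j] by (intro sum.cong refl) auto
  also have "\<dots> = (if j = j' then of_nat d else 0)"
  proof (cases "j = 0")
    case j0: True
    show ?thesis
    proof (cases "j' = 0")
      case True
      have e0: "lamx lam j a b * lamx lam j' b a = (if a = b then 1 else 0)" for a b
        using j0 True unfolding lamx_def by auto
      have "(\<Sum>a<d. \<Sum>b<d. lamx lam j a b * lamx lam j' b a) = (\<Sum>a<d. \<Sum>b<d. (if a = b then 1 else 0::complex))"
        by (simp only: e0)
      also have "\<dots> = (\<Sum>a<d. 1)" by (intro sum.cong refl) simp
      also have "\<dots> = of_nat d" by simp
      finally show ?thesis using j0 True by simp
    next
      case False
      have "(\<Sum>a<d. \<Sum>b<d. lamx lam j a b * lamx lam j' b a) = (\<Sum>a<d. lamx lam j' a a)"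
      proof (intro sum.cong refl)
        fix a assume "a \<in> {..<d}"
        have e1: "lamx lam j a b * lamx lam j' b a = (if a = b then lam j' b a else 0)" for b
          using j0 False unfolding lamx_def by simp
        have "(\<Sum>b<d. lamx lam j a b * lamx lam j' b a) = (\<Sum>b<d. if a = b then lam j' b a else 0)"
          by (simp only: e1)
        also have "\<dots> = lam j' a a" using \<open>a \<in> {..<d}\<close> by simp
        also have "\<dots> = lamx lam j' a a" using False by (simp add: lamx_def)
        finally show "(\<Sum>b<d. lamx lam j a b * lamx lam j' b a) = lamx lam j' a a" .
      qed
      also have "\<dots> = 0" using lb_trace[OF lb j' False] .
      finally show ?thesis using j0 False by simp
    qed
  next
    case jn0: False
    show ?thesis
    proof (cases "j' = 0")
      case True
      have "(\<Sum>a<d. \<Sum>b<d. lamx lam j a b * lamx lam j' b a) = (\<Sum>a<d. lamx lam j a a)"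
      proof (intro sum.cong refl)
        fix a assume "a \<in> {..<d}"
        have e1: "lamx lam j a b * lamx lam j' b a = (if b = a then lam j a b else 0)" for b
          using jn0 True unfolding lamx_def by simp
        have "(\<Sum>b<d. lamx lam j a b * lamx lam j' b a) = (\<Sum>b<d. if b = a then lam j a b else 0)"
          by (simp only: e1)
        also have "\<dots> = lam j a a" using \<open>a \<in> {..<d}\<close> by simp
        also have "\<dots> = lamx lam j a a" using jn0 by (simp add: lamx_def)
        finally show "(\<Sum>b<d. lamx lam j a b * lamx lam j' b a) = lamx lam j a a" .
      qed
      also have "\<dots> = 0" using lb_trace[OF lb j jn0] .
      finally show ?thesis using jn0 True by simp
    next
      case False
      have "j \<in> {1..<d^2}" "j' \<in> {1..<d^2}" using j j' jn0 False by auto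
      then have "(\<Sum>a<d. \<Sum>b<d. lam j a b * lam j' b a) = (if j = j' then of_nat d else 0)"
        using lb unfolding local_basis_def by blast
      then show ?thesis using jn0 False unfolding lamx_def by simp
    qed
  qed
  finally show ?thesis .
qed

lemma EE_orth:
  assumes lb: "local_basis d lam" and fS: "finite S"
    and jr: "\<And>k. k \<in> S \<Longrightarrow> j k < d^2" and jr': "\<And>k. k \<in> S \<Longrightarrow> j' k < d^2"
  shows "(\<Sum>x\<in>configs d S. \<Sum>y\<in>configs d S. cnj (EE lam S j y x) * EE lam S j' y x)
       = (if \<forall>k\<in>S. j k = j' k then of_nat d ^ card S else 0)"
proof -
  define g where "g k a b = cnj (lamx lam (j k) b a) * lamx lam (j' k) b a" for k a b
  have "(\<Sum>x\<in>configs d S. \<Sum>y\<in>configs d S. cnj (EE lam S j y x) * EE lam S j' y x)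
      = (\<Sum>x\<in>configs d S. \<Sum>y\<in>configs d S. \<Prod>k\<in>S. g k (x k) (y k))"
    unfolding EE_def g_def by (simp add: prod.distrib)
  also have "\<dots> = (\<Sum>x\<in>configs d S. \<Prod>k\<in>S. \<Sum>b<d. g k (x k) b)"
  proof (rule sum.cong[OF refl])
    fix x
    show "(\<Sum>y\<in>configs d S. \<Prod>k\<in>S. g k (x k) (y k)) = (\<Prod>k\<in>S. \<Sum>b<d. g k (x k) b)"
      using sum_configs_prod[OF fS, where f="\<lambda>k b. g k (x k) b" and d=d] by simp
  qed
  also have "\<dots> = (\<Prod>k\<in>S. \<Sum>a<d. \<Sum>b<d. g k a b)"
    by (rule sum_configs_prod[OF fS])
  also have "\<dots> = (\<Prod>k\<in>S. (if j k = j' k then of_nat d else 0))"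
    unfolding g_def using local_orth[OF lb jr jr'] by (intro prod.cong refl) auto
  also have "\<dots> = (if \<forall>k\<in>S. j k = j' k then of_nat d ^ card S else 0)"
    using fS by auto
  finally show ?thesis .
qed

lemma sum_delta_mult:
  assumes "finite B" "b \<in> B"
  shows "(\<Sum>b'\<in>B. f b' * (if b' = b then 1 else 0 :: complex)) = f b"
  using assms by (simp add: if_distrib cong: if_cong)

lemma trace_eq:
  assumes al: "\<alpha> \<subseteq> {..<n}" and i: "i \<in> PiE \<alpha> (\<lambda>_. {1..<d^2})"
  shows "trace_prod d \<alpha> (reduced d n \<rho> \<alpha>) (tensor_op lam \<alpha> i) = Tf d n lam \<rho> \<alpha> i"
proof -
  let ?N = "{..<n}"
  let ?A = "configs d \<alpha>" and ?B = "configs d (?N - \<alpha>)"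
  let ?j = "ext \<alpha> i"
  have inz: "\<forall>k\<in>\<alpha>. i k \<noteq> 0" using i by (auto simp: PiE_def Pi_def)
  have eA: "EE lam \<alpha> ?j a' a = tensor_op lam \<alpha> i a' a" for a a'
    using inz unfolding EE_def tensor_op_def lamx_def ext_def by (intro prod.cong) auto
  have eB: "EE lam (?N - \<alpha>) ?j b' b = (if b' = b then 1 else 0)" if "b \<in> ?B" "b' \<in> ?B" for b b'
  proof -
    have "EE lam (?N - \<alpha>) ?j b' b = (\<Prod>k\<in>?N - \<alpha>. (if b' k = b k then 1 else 0::complex))"
      unfolding EE_def lamx_def ext_def by (intro prod.cong) auto
    then show ?thesis using delta_prod[OF _ that(1) that(2)] by simp
  qed
  have "Tf d n lam \<rho> \<alpha> i = (\<Sum>a\<in>?A. \<Sum>b\<in>?B. \<Sum>a'\<in>?A. \<Sum>b'\<in>?B.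
          \<rho> (glue \<alpha> a b) (glue \<alpha> a' b') * EE lam ?N ?j (glue \<alpha> a' b') (glue \<alpha> a b))"
  proof -
    have sp: "\<And>f. (\<Sum>x\<in>configs d {..<n}. f x) = (\<Sum>a\<in>?A. \<Sum>b\<in>?B. f (glue \<alpha> a b))"
      using sum_split[OF al] by simp
    have "Tf d n lam \<rho> \<alpha> i = (\<Sum>a\<in>?A. \<Sum>b\<in>?B. \<Sum>y\<in>configs d ?N. \<rho> (glue \<alpha> a b) y * EE lam ?N ?j y (glue \<alpha> a b))"
      unfolding Tf_def by (rule sp)
    also have "\<dots> = (\<Sum>a\<in>?A. \<Sum>b\<in>?B. \<Sum>a'\<in>?A. \<Sum>b'\<in>?B.
          \<rho> (glue \<alpha> a b) (glue \<alpha> a' b') * EE lam ?N ?j (glue \<alpha> a' b') (glue \<alpha> a b))"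
      by (rule sum.cong[OF refl], rule sum.cong[OF refl], rule sp)
    finally show ?thesis .
  qed
  also have "\<dots> = (\<Sum>a\<in>?A. \<Sum>b\<in>?B. \<Sum>a'\<in>?A. \<rho> (glue \<alpha> a b) (glue \<alpha> a' b) * tensor_op lam \<alpha> i a' a)"
  proof (intro sum.cong refl)
    fix a b a' assume b: "b \<in> ?B"
    have "(\<Sum>b'\<in>?B. \<rho> (glue \<alpha> a b) (glue \<alpha> a' b') * EE lam ?N ?j (glue \<alpha> a' b') (glue \<alpha> a b))
        = (\<Sum>b'\<in>?B. (\<rho> (glue \<alpha> a b) (glue \<alpha> a' b') * tensor_op lam \<alpha> i a' a) * (if b' = b then 1 else 0))"
      using EE_split[OF al] eA eB b by (intro sum.cong refl) (simp add: mult_ac)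
    also have "\<dots> = \<rho> (glue \<alpha> a b) (glue \<alpha> a' b) * tensor_op lam \<alpha> i a' a"
      by (rule sum_delta_mult[OF _ b]) simp
    finally show "(\<Sum>b'\<in>?B. \<rho> (glue \<alpha> a b) (glue \<alpha> a' b') * EE lam ?N ?j (glue \<alpha> a' b') (glue \<alpha> a b))
        = \<rho> (glue \<alpha> a b) (glue \<alpha> a' b) * tensor_op lam \<alpha> i a' a" .
  qed
  also have "\<dots> = (\<Sum>a\<in>?A. \<Sum>a'\<in>?A. (\<Sum>b\<in>?B. \<rho> (glue \<alpha> a b) (glue \<alpha> a' b)) * tensor_op lam \<alpha> i a' a)"
  proof (rule sum.cong[OF refl])
    fix a
    have "(\<Sum>b\<in>?B. \<Sum>a'\<in>?A. \<rho> (glue \<alpha> a b) (glue \<alpha> a' b) * tensor_op lam \<alpha> i a' a)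
        = (\<Sum>a'\<in>?A. \<Sum>b\<in>?B. \<rho> (glue \<alpha> a b) (glue \<alpha> a' b) * tensor_op lam \<alpha> i a' a)"
      by (rule sum.swap)
    then show "(\<Sum>b\<in>?B. \<Sum>a'\<in>?A. \<rho> (glue \<alpha> a b) (glue \<alpha> a' b) * tensor_op lam \<alpha> i a' a)
        = (\<Sum>a'\<in>?A. (\<Sum>b\<in>?B. \<rho> (glue \<alpha> a b) (glue \<alpha> a' b)) * tensor_op lam \<alpha> i a' a)"
      by (simp add: sum_distrib_right)
  qed
  also have "\<dots> = trace_prod d \<alpha> (reduced d n \<rho> \<alpha>) (tensor_op lam \<alpha> i)"
    unfolding trace_prod_def reduced_def by simp
  finally show ?thesis by simp
qed

lemma bessel:
  fixes e :: "'i \<Rightarrow> 'x \<Rightarrow> complex" and v :: "'x \<Rightarrow> complex" and c :: "'i \<Rightarrow> real"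
  assumes fX: "finite X" and fI: "finite I"
    and orth: "\<And>a b. a \<in> I \<Longrightarrow> b \<in> I \<Longrightarrow> a \<noteq> b \<Longrightarrow> (\<Sum>x\<in>X. e a x * cnj (e b x)) = 0"
    and nrm: "\<And>a. a \<in> I \<Longrightarrow> (\<Sum>x\<in>X. e a x * cnj (e a x)) = of_real (c a)"
    and pos: "\<And>a. a \<in> I \<Longrightarrow> c a > 0"
  shows "(\<Sum>a\<in>I. (cmod (\<Sum>x\<in>X. v x * cnj (e a x)))^2 / c a) \<le> (\<Sum>x\<in>X. (cmod (v x))^2)"
proof -
  define ip where "ip a = (\<Sum>x\<in>X. v x * cnj (e a x))" for a
  define co where "co a = ip a / of_real (c a)" for a
  define s where "s x = (\<Sum>a\<in>I. co a * e a x)" for x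
  define K where "K = (\<Sum>a\<in>I. (cmod (ip a))^2 / c a)"
  have coip: "cnj (co a) * ip a = of_real ((cmod (ip a))^2 / c a)" for a
  proof -
    have "cnj (co a) * ip a = (ip a * cnj (ip a)) / of_real (c a)" unfolding co_def by simp
    also have "\<dots> = of_real ((cmod (ip a))^2) / of_real (c a)" by (simp only: complex_norm_square)
    also have "\<dots> = of_real ((cmod (ip a))^2 / c a)" by simp
    finally show ?thesis .
  qed
  have h1: "(\<Sum>x\<in>X. v x * cnj (s x)) = of_real K"
  proof -
    have "(\<Sum>x\<in>X. v x * cnj (s x)) = (\<Sum>x\<in>X. \<Sum>a\<in>I. cnj (co a) * (v x * cnj (e a x)))"
      unfolding s_def by (simp add: sum_distrib_left mult_ac)
    also have "\<dots> = (\<Sum>a\<in>I. cnj (co a) * ip a)"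
      unfolding ip_def by (subst sum.swap) (simp add: sum_distrib_left)
    also have "\<dots> = of_real K" unfolding K_def coip by simp
    finally show ?thesis .
  qed
  have h3: "(\<Sum>x\<in>X. s x * cnj (v x)) = of_real K"
  proof -
    have "(\<Sum>x\<in>X. s x * cnj (v x)) = cnj (\<Sum>x\<in>X. v x * cnj (s x))" by (simp add: mult.commute)
    then show ?thesis using h1 by simp
  qed
  have inner: "(\<Sum>b\<in>I. cnj (co b) * (\<Sum>x\<in>X. e a x * cnj (e b x))) = cnj (co a) * of_real (c a)"
    if a: "a \<in> I" for a
  proof -
    have "(\<Sum>b\<in>I. cnj (co b) * (\<Sum>x\<in>X. e a x * cnj (e b x)))
        = (\<Sum>b\<in>I. if b = a then cnj (co a) * of_real (c a) else 0)"
      using orth[OF a] nrm[OF a] by (intro sum.cong refl) auto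
    also have "\<dots> = cnj (co a) * of_real (c a)" using fI a by simp
    finally show ?thesis .
  qed
  have h2: "(\<Sum>x\<in>X. s x * cnj (s x)) = of_real K"
  proof -
    have "(\<Sum>x\<in>X. s x * cnj (s x)) = (\<Sum>x\<in>X. \<Sum>a\<in>I. \<Sum>b\<in>I. co a * cnj (co b) * (e a x * cnj (e b x)))"
      unfolding s_def by (simp add: sum_product mult_ac)
    also have "\<dots> = (\<Sum>a\<in>I. \<Sum>b\<in>I. co a * cnj (co b) * (\<Sum>x\<in>X. e a x * cnj (e b x)))"
      by (simp add: sum.swap[of _ X] sum_distrib_left)
    also have "\<dots> = (\<Sum>a\<in>I. co a * (\<Sum>b\<in>I. cnj (co b) * (\<Sum>x\<in>X. e a x * cnj (e b x))))"
      by (simp add: sum_distrib_left mult_ac)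
    also have "\<dots> = (\<Sum>a\<in>I. co a * (cnj (co a) * of_real (c a)))"
      using inner by (intro sum.cong refl) auto
    also have "\<dots> = (\<Sum>a\<in>I. of_real ((cmod (ip a))^2 / c a))"
    proof (intro sum.cong refl)
      fix a assume a: "a \<in> I"
      have "c a \<noteq> 0" using pos[OF a] by simp
      then have "co a * of_real (c a) = ip a" unfolding co_def by simp
      moreover have "co a * (cnj (co a) * of_real (c a)) = cnj (co a) * (co a * of_real (c a))"
        by (simp add: mult_ac)
      ultimately show "co a * (cnj (co a) * of_real (c a)) = of_real ((cmod (ip a))^2 / c a)"
        using coip by simp
    qed
    also have "\<dots> = of_real K" unfolding K_def by simp
    finally show ?thesis .
  qed
  have ex: "complex_of_real ((cmod (v x - s x))^2) = v x * cnj (v x) - v x * cnj (s x) - s x * cnj (v x) + s x * cnj (s x)" for x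
  proof -
    have "complex_of_real ((cmod (v x - s x))^2) = (v x - s x) * cnj (v x - s x)" by (rule complex_norm_square)
    thus ?thesis by (simp add: algebra_simps)
  qed
  have vv: "(\<Sum>x\<in>X. v x * cnj (v x)) = of_real (\<Sum>x\<in>X. (cmod (v x))^2)"
    by (simp only: of_real_sum complex_norm_square)
  have "complex_of_real (\<Sum>x\<in>X. (cmod (v x - s x))^2)
      = (\<Sum>x\<in>X. v x * cnj (v x) - v x * cnj (s x) - s x * cnj (v x) + s x * cnj (s x))"
    by (simp only: of_real_sum ex)
  also have "\<dots> = (\<Sum>x\<in>X. v x * cnj (v x)) - (\<Sum>x\<in>X. v x * cnj (s x)) - (\<Sum>x\<in>X. s x * cnj (v x)) + (\<Sum>x\<in>X. s x * cnj (s x))"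
    by (simp add: sum.distrib sum_subtractf)
  also have "\<dots> = of_real ((\<Sum>x\<in>X. (cmod (v x))^2) - K)"
    unfolding vv h1 h2 h3 by simp
  finally have eq: "(\<Sum>x\<in>X. (cmod (v x - s x))^2) = (\<Sum>x\<in>X. (cmod (v x))^2) - K"
    using of_real_eq_iff by blast
  have "0 \<le> (\<Sum>x\<in>X. (cmod (v x - s x))^2)" by (simp add: sum_nonneg)
  then show ?thesis using eq unfolding K_def ip_def by simp
qed

definition Sset :: "nat \<Rightarrow> nat set set" where
  "Sset n = {\<alpha>. \<alpha> \<subseteq> {..<n} \<and> \<alpha> \<noteq> {} \<and> real (card \<alpha>) \<ge> real n / 2 + 1}"

lemma finite_Sset: "finite (Sset n)"
proof -
  have "Sset n \<subseteq> Pow {..<n}" unfolding Sset_def by auto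
  then show ?thesis by (rule finite_subset) simp
qed

lemma finite_PiE_S: "\<alpha> \<in> Sset n \<Longrightarrow> finite (PiE \<alpha> (\<lambda>_. {1..<(d::nat)^2}))"
proof -
  assume "\<alpha> \<in> Sset n"
  then have "finite \<alpha>" unfolding Sset_def using finite_subset by auto
  then show ?thesis by (rule finite_PiE) simp_all
qed

lemma sum_pair: "(\<Sum>p\<in>A\<times>B. F p) = (\<Sum>x\<in>A. \<Sum>y\<in>B. F (x,y))"
  by (simp add: sum.cartesian_product)

lemma ext_range:
  assumes "i \<in> PiE \<alpha> (\<lambda>_. {1..<d^2})" "d > 0"
  shows "ext \<alpha> i k < d^2"
proof (cases "k \<in> \<alpha>")
  case True
  then have "i k \<in> {1..<d^2}" using assms by auto
  then show ?thesis using True unfolding ext_def by simp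
next
  case False
  then show ?thesis using assms(2) unfolding ext_def by simp
qed

lemma ext_inj:
  assumes a: "\<alpha> \<subseteq> N" and a': "\<alpha>' \<subseteq> N"
    and i: "i \<in> PiE \<alpha> (\<lambda>_. {1..<d^2})" and i': "i' \<in> PiE \<alpha>' (\<lambda>_. {1..<d^2})"
    and eq: "\<forall>k\<in>N. ext \<alpha> i k = ext \<alpha>' i' k"
  shows "\<alpha> = \<alpha>' \<and> i = i'"
proof -
  have nz: "i k \<noteq> 0" if "k \<in> \<alpha>" for k using i that by (auto simp: PiE_def Pi_def)
  have nz': "i' k \<noteq> 0" if "k \<in> \<alpha>'" for k using i' that by (auto simp: PiE_def Pi_def)
  have aa: "\<alpha> = \<alpha>'"
  proof
    show "\<alpha> \<subseteq> \<alpha>'"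
    proof
      fix k assume k: "k \<in> \<alpha>"
      then have "ext \<alpha> i k = ext \<alpha>' i' k" using eq a by auto
      then show "k \<in> \<alpha>'" using k nz[OF k] unfolding ext_def by (auto split: if_splits)
    qed
    show "\<alpha>' \<subseteq> \<alpha>"
    proof
      fix k assume k: "k \<in> \<alpha>'"
      then have "ext \<alpha> i k = ext \<alpha>' i' k" using eq a' by auto
      then show "k \<in> \<alpha>" using k nz'[OF k] unfolding ext_def by (auto split: if_splits)
    qed
  qed
  have "i = i'"
  proof (rule extensionalityI[of i \<alpha>])
    show "i \<in> extensional \<alpha>" using i by (simp add: PiE_def)
    show "i' \<in> extensional \<alpha>" using i' aa by (simp add: PiE_def)
    fix k assume k: "k \<in> \<alpha>"
    then have "ext \<alpha> i k = ext \<alpha>' i' k" using eq a by auto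
    then show "i k = i' k" using k aa unfolding ext_def by simp
  qed
  with aa show ?thesis by simp
qed

lemma sum_collapse:
  assumes "finite B" "b \<in> B"
  shows "(\<Sum>b'\<in>B. f b' * (if b = b' then 1 else 0 :: complex)) = f b"
  using assms by (simp add: if_distrib cong: if_cong)

lemma pure_bound:
  fixes \<psi> \<phi> \<chi> :: "cfg \<Rightarrow> complex"
  assumes lb: "local_basis d lam" and d2: "d \<ge> 2"
    and gN: "\<gamma> \<subseteq> {..<n}" and gne: "\<gamma> \<noteq> {}" and cg: "real (card \<gamma>) < real n / 2 + 1"
    and psi: "\<And>x. x \<in> configs d {..<n} \<Longrightarrow> \<psi> x = \<phi> (restrict x \<gamma>) * \<chi> (restrict x ({..<n} - \<gamma>))"
    and nrm: "(\<Sum>x\<in>configs d {..<n}. (cmod (\<psi> x))^2) = 1"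
  shows "(\<Sum>\<alpha>\<in>Sset n. \<Sum>i\<in>PiE \<alpha> (\<lambda>_. {1..<d^2}). (cmod (Tf d n lam (\<lambda>x y. \<psi> x * cnj (\<psi> y)) \<alpha> i))^2)
           \<le> real d ^ n - real d"
proof -
  let ?N = "{..<n}"
  let ?C = "configs d ?N" and ?A = "configs d \<gamma>" and ?B = "configs d (?N - \<gamma>)"
  have d0: "d > 0" using d2 by simp
  have fN: "finite ?N" by simp
  have fg: "finite \<gamma>" using gN finite_subset by blast
  have sp: "\<And>f. (\<Sum>x\<in>?C. f x) = (\<Sum>a\<in>?A. \<Sum>b\<in>?B. f (glue \<gamma> a b))"
    using sum_split[OF gN] by simp
  have sp2: "(\<Sum>x\<in>?C. \<Sum>y\<in>?C. h x y) = (\<Sum>a\<in>?A. \<Sum>b\<in>?B. \<Sum>a'\<in>?A. \<Sum>b'\<in>?B. h (glue \<gamma> a b) (glue \<gamma> a' b'))"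
    for h :: "cfg \<Rightarrow> cfg \<Rightarrow> complex"
  proof -
    have "(\<Sum>x\<in>?C. \<Sum>y\<in>?C. h x y) = (\<Sum>a\<in>?A. \<Sum>b\<in>?B. \<Sum>y\<in>?C. h (glue \<gamma> a b) y)" by (rule sp)
    also have "\<dots> = (\<Sum>a\<in>?A. \<Sum>b\<in>?B. \<Sum>a'\<in>?A. \<Sum>b'\<in>?B. h (glue \<gamma> a b) (glue \<gamma> a' b'))"
      by (rule sum.cong[OF refl], rule sum.cong[OF refl], rule sp)
    finally show ?thesis .
  qed
  have psig: "\<psi> (glue \<gamma> a b) = \<phi> a * \<chi> b" if "a \<in> ?A" "b \<in> ?B" for a b
    using psi[OF glue_in[OF that gN]] restrict_glue1[OF that(1)] restrict_glue2[OF that(2)] by simp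
  define nphi where "nphi = (\<Sum>a\<in>?A. (cmod (\<phi> a))^2)"
  define nchi where "nchi = (\<Sum>b\<in>?B. (cmod (\<chi> b))^2)"
  define w where "w a = (cmod (\<phi> a))^2" for a
  define u where "u b = (cmod (\<chi> b))^2" for b
  have wa: "\<phi> a * cnj (\<phi> a) = complex_of_real (w a)" for a
    unfolding w_def by (rule complex_norm_square[symmetric])
  have ub: "\<chi> b * cnj (\<chi> b) = complex_of_real (u b)" for b
    unfolding u_def by (rule complex_norm_square[symmetric])
  have nphi_w: "nphi = (\<Sum>a\<in>?A. w a)" unfolding nphi_def w_def ..
  have nchi_u: "nchi = (\<Sum>b\<in>?B. u b)" unfolding nchi_def u_def ..
  have nn: "nphi * nchi = 1"
  proof -
    have "(\<Sum>x\<in>?C. (cmod (\<psi> x))^2) = (\<Sum>a\<in>?A. \<Sum>b\<in>?B. (cmod (\<psi> (glue \<gamma> a b)))^2)" by (rule sp)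
    also have "\<dots> = (\<Sum>a\<in>?A. \<Sum>b\<in>?B. (cmod (\<phi> a))^2 * (cmod (\<chi> b))^2)"
      using psig by (intro sum.cong refl) (simp add: norm_mult power_mult_distrib)
    also have "\<dots> = nphi * nchi" unfolding nphi_def nchi_def by (simp add: sum_product)
    finally show ?thesis using nrm by simp
  qed
  have nphi_ge: "nphi \<ge> 0" unfolding nphi_def by (simp add: sum_nonneg)
  have nchi_ge: "nchi \<ge> 0" unfolding nchi_def by (simp add: sum_nonneg)
  have nphi_pos: "nphi > 0" using nn nphi_ge by (cases "nphi = 0") auto
  define m where "m = card (?N - \<gamma>)"
  have cardB: "card ?B = d ^ m" unfolding configs_def m_def by (simp add: card_PiE)
  have km: "card \<gamma> + m = n"
  proof -
    have "card (?N - \<gamma>) = card ?N - card \<gamma>" using card_Diff_subset[OF fg gN] .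
    moreover have "card \<gamma> \<le> card ?N" using card_mono[OF fN gN] .
    ultimately show ?thesis unfolding m_def by simp
  qed
  have g1: "card \<gamma> \<ge> 1" using gne fg by (simp add: Suc_le_eq card_gt_0_iff)
  define Idx where "Idx = Sigma (Sset n) (\<lambda>\<alpha>. PiE \<alpha> (\<lambda>_. {1..<d^2}))"
  have fIdx: "finite Idx" unfolding Idx_def
    by (rule finite_SigmaI[OF finite_Sset]) (rule finite_PiE_S)
  define I where "I = insert None (Some ` Idx)"
  define X where "X = ?C \<times> ?C"
  define v where "v p = \<psi> (fst p) * cnj (\<psi> (snd p))" for p
  define eN where "eN x y = \<phi> (restrict x \<gamma>) * cnj (\<phi> (restrict y \<gamma>)) *
      (if restrict x (?N - \<gamma>) = restrict y (?N - \<gamma>) then 1 else 0)" for x y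
  define e where "e q p = (case q of Some ai \<Rightarrow> cnj (EE lam ?N (ext (fst ai) (snd ai)) (snd p) (fst p))
      | None \<Rightarrow> eN (fst p) (snd p))" for q p
  define c where "c (q :: (nat set \<times> (nat \<Rightarrow> nat)) option) = (case q of Some ai \<Rightarrow> real d ^ n | None \<Rightarrow> nphi^2 * real d ^ m)" for q
  have eNg: "eN (glue \<gamma> a b) (glue \<gamma> a' b') = \<phi> a * cnj (\<phi> a') * (if b = b' then 1 else 0)"
    if "a \<in> ?A" "b \<in> ?B" "a' \<in> ?A" "b' \<in> ?B" for a b a' b'
    unfolding eN_def using restrict_glue1[OF that(1)] restrict_glue1[OF that(3)]
      restrict_glue2[OF that(2)] restrict_glue2[OF that(4)] by simp
  have idx: "\<alpha> \<subseteq> ?N" "i \<in> PiE \<alpha> (\<lambda>_. {1..<d^2})" "\<exists>k0\<in>?N - \<gamma>. ext \<alpha> i k0 \<noteq> 0 \<and> ext \<alpha> i k0 < d^2"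
    if "(\<alpha>, i) \<in> Idx" for \<alpha> i
  proof -
    from that have S: "\<alpha> \<in> Sset n" and i: "i \<in> PiE \<alpha> (\<lambda>_. {1..<d^2})" unfolding Idx_def by auto
    then show "\<alpha> \<subseteq> ?N" "i \<in> PiE \<alpha> (\<lambda>_. {1..<d^2})" unfolding Sset_def by auto
    have "\<not> \<alpha> \<subseteq> \<gamma>"
    proof
      assume "\<alpha> \<subseteq> \<gamma>"
      then have "card \<alpha> \<le> card \<gamma>" using card_mono[OF fg] by blast
      then show False using S cg unfolding Sset_def by auto
    qed
    then obtain k0 where k0: "k0 \<in> \<alpha>" "k0 \<notin> \<gamma>" by auto
    then have "i k0 \<in> {1..<d^2}" using i by auto
    then show "\<exists>k0\<in>?N - \<gamma>. ext \<alpha> i k0 \<noteq> 0 \<and> ext \<alpha> i k0 < d^2"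
      using k0 S unfolding ext_def Sset_def by (intro bexI[of _ k0]) auto
  qed
  have Z: "(\<Sum>x\<in>?C. \<Sum>y\<in>?C. EE lam ?N j y x * eN x y) = 0"
    if k0: "k0 \<in> ?N - \<gamma>" "j k0 \<noteq> 0" "j k0 < d^2" for j k0
  proof -
    have tz: "(\<Sum>b\<in>?B. EE lam (?N - \<gamma>) j b b) = 0"
    proof -
      have "(\<Sum>b\<in>?B. EE lam (?N - \<gamma>) j b b) = (\<Prod>k\<in>?N - \<gamma>. \<Sum>c<d. lamx lam (j k) c c)"
        unfolding EE_def by (rule sum_configs_prod) simp
      also have "\<dots> = 0"
        using lb_trace[OF lb k0(3) k0(2)] k0(1) by (simp add: prod_zero_iff) blast
      finally show ?thesis .
    qed
    have "(\<Sum>x\<in>?C. \<Sum>y\<in>?C. EE lam ?N j y x * eN x y)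
       = (\<Sum>a\<in>?A. \<Sum>b\<in>?B. \<Sum>a'\<in>?A. \<Sum>b'\<in>?B. EE lam ?N j (glue \<gamma> a' b') (glue \<gamma> a b) * eN (glue \<gamma> a b) (glue \<gamma> a' b'))"
      by (rule sp2)
    also have "\<dots> = (\<Sum>a\<in>?A. \<Sum>b\<in>?B. \<Sum>a'\<in>?A. (EE lam \<gamma> j a' a * \<phi> a * cnj (\<phi> a')) * EE lam (?N - \<gamma>) j b b)"
    proof (intro sum.cong refl)
      fix a b a' assume a: "a \<in> ?A" and b: "b \<in> ?B" and a': "a' \<in> ?A"
      have "(\<Sum>b'\<in>?B. EE lam ?N j (glue \<gamma> a' b') (glue \<gamma> a b) * eN (glue \<gamma> a b) (glue \<gamma> a' b'))
          = (\<Sum>b'\<in>?B. ((EE lam \<gamma> j a' a * \<phi> a * cnj (\<phi> a')) * EE lam (?N - \<gamma>) j b' b) * (if b = b' then 1 else 0))"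
        using EE_split[OF gN fN] eNg[OF a b a'] by (intro sum.cong refl) (simp add: mult_ac)
      also have "\<dots> = (EE lam \<gamma> j a' a * \<phi> a * cnj (\<phi> a')) * EE lam (?N - \<gamma>) j b b"
        by (rule sum_collapse[OF _ b]) simp
      finally show "(\<Sum>b'\<in>?B. EE lam ?N j (glue \<gamma> a' b') (glue \<gamma> a b) * eN (glue \<gamma> a b) (glue \<gamma> a' b'))
          = (EE lam \<gamma> j a' a * \<phi> a * cnj (\<phi> a')) * EE lam (?N - \<gamma>) j b b" .
    qed
    also have "\<dots> = (\<Sum>a\<in>?A. \<Sum>a'\<in>?A. (EE lam \<gamma> j a' a * \<phi> a * cnj (\<phi> a')) * (\<Sum>b\<in>?B. EE lam (?N - \<gamma>) j b b))"
    proof (rule sum.cong[OF refl])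
      fix a
      have "(\<Sum>b\<in>?B. \<Sum>a'\<in>?A. (EE lam \<gamma> j a' a * \<phi> a * cnj (\<phi> a')) * EE lam (?N - \<gamma>) j b b)
          = (\<Sum>a'\<in>?A. \<Sum>b\<in>?B. (EE lam \<gamma> j a' a * \<phi> a * cnj (\<phi> a')) * EE lam (?N - \<gamma>) j b b)"
        by (rule sum.swap)
      then show "(\<Sum>b\<in>?B. \<Sum>a'\<in>?A. (EE lam \<gamma> j a' a * \<phi> a * cnj (\<phi> a')) * EE lam (?N - \<gamma>) j b b)
          = (\<Sum>a'\<in>?A. (EE lam \<gamma> j a' a * \<phi> a * cnj (\<phi> a')) * (\<Sum>b\<in>?B. EE lam (?N - \<gamma>) j b b))"
        by (simp add: sum_distrib_left)
    qed
    also have "\<dots> = 0" unfolding tz by simp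
    finally show ?thesis .
  qed
  have nN: "(\<Sum>p\<in>X. eN (fst p) (snd p) * cnj (eN (fst p) (snd p))) = of_real (nphi^2 * real d ^ m)"
  proof -
    have "(\<Sum>p\<in>X. eN (fst p) (snd p) * cnj (eN (fst p) (snd p))) = (\<Sum>x\<in>?C. \<Sum>y\<in>?C. eN x y * cnj (eN x y))"
      unfolding X_def sum_pair by simp
    also have "\<dots> = (\<Sum>a\<in>?A. \<Sum>b\<in>?B. \<Sum>a'\<in>?A. \<Sum>b'\<in>?B. eN (glue \<gamma> a b) (glue \<gamma> a' b') * cnj (eN (glue \<gamma> a b) (glue \<gamma> a' b')))"
      by (rule sp2)
    also have "\<dots> = (\<Sum>a\<in>?A. \<Sum>b\<in>?B. \<Sum>a'\<in>?A. of_real (w a * w a'))"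
    proof (intro sum.cong refl)
      fix a b a' assume a: "a \<in> ?A" and b: "b \<in> ?B" and a': "a' \<in> ?A"
      have pp: "\<phi> a * cnj (\<phi> a') * (cnj (\<phi> a) * \<phi> a') = (\<phi> a * cnj (\<phi> a)) * (\<phi> a' * cnj (\<phi> a'))"
        by (simp add: mult_ac)
      have "(\<Sum>b'\<in>?B. eN (glue \<gamma> a b) (glue \<gamma> a' b') * cnj (eN (glue \<gamma> a b) (glue \<gamma> a' b')))
          = (\<Sum>b'\<in>?B. of_real (w a * w a') * (if b = b' then 1 else 0))"
      proof (intro sum.cong refl)
        fix b' assume b': "b' \<in> ?B"
        show "eN (glue \<gamma> a b) (glue \<gamma> a' b') * cnj (eN (glue \<gamma> a b) (glue \<gamma> a' b'))
            = of_real (w a * w a') * (if b = b' then 1 else 0)"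
        proof (cases "b = b'")
          case True
          have "eN (glue \<gamma> a b) (glue \<gamma> a' b') * cnj (eN (glue \<gamma> a b) (glue \<gamma> a' b'))
              = (\<phi> a * cnj (\<phi> a)) * (\<phi> a' * cnj (\<phi> a'))"
            unfolding eNg[OF a b a' b'] using True by (simp add: mult_ac)
          then show ?thesis using True by (simp add: wa)
        next
          case False
          then show ?thesis unfolding eNg[OF a b a' b'] by simp
        qed
      qed
      also have "\<dots> = of_real (w a * w a')"
        by (rule sum_collapse[OF _ b]) simp
      finally show "(\<Sum>b'\<in>?B. eN (glue \<gamma> a b) (glue \<gamma> a' b') * cnj (eN (glue \<gamma> a b) (glue \<gamma> a' b')))
          = of_real (w a * w a')" .
    qed
    also have "\<dots> = of_real (\<Sum>a\<in>?A. \<Sum>b\<in>?B. \<Sum>a'\<in>?A. w a * w a')"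
      by simp
    also have "(\<Sum>a\<in>?A. \<Sum>b\<in>?B. \<Sum>a'\<in>?A. w a * w a') = nphi^2 * real d ^ m"
      unfolding nphi_w power2_eq_square[of "sum _ _"] by (simp add: sum_product cardB sum_distrib_left mult_ac)
    finally show ?thesis .
  qed
  have vN: "(\<Sum>p\<in>X. v p * cnj (eN (fst p) (snd p))) = of_real (nphi^2 * nchi)"
  proof -
    have "(\<Sum>p\<in>X. v p * cnj (eN (fst p) (snd p))) = (\<Sum>x\<in>?C. \<Sum>y\<in>?C. \<psi> x * cnj (\<psi> y) * cnj (eN x y))"
      unfolding X_def sum_pair v_def by simp
    also have "\<dots> = (\<Sum>a\<in>?A. \<Sum>b\<in>?B. \<Sum>a'\<in>?A. \<Sum>b'\<in>?B. \<psi> (glue \<gamma> a b) * cnj (\<psi> (glue \<gamma> a' b')) * cnj (eN (glue \<gamma> a b) (glue \<gamma> a' b')))"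
      by (rule sp2)
    also have "\<dots> = (\<Sum>a\<in>?A. \<Sum>b\<in>?B. \<Sum>a'\<in>?A. of_real (w a * w a' * u b))"
    proof (intro sum.cong refl)
      fix a b a' assume a: "a \<in> ?A" and b: "b \<in> ?B" and a': "a' \<in> ?A"
      have "(\<Sum>b'\<in>?B. \<psi> (glue \<gamma> a b) * cnj (\<psi> (glue \<gamma> a' b')) * cnj (eN (glue \<gamma> a b) (glue \<gamma> a' b')))
          = (\<Sum>b'\<in>?B. (of_real (w a * w a') * (\<chi> b * cnj (\<chi> b'))) * (if b = b' then 1 else 0))"
      proof (intro sum.cong refl)
        fix b' assume b': "b' \<in> ?B"
        have pp: "\<phi> a * \<chi> b * (cnj (\<phi> a') * cnj (\<chi> b')) * (cnj (\<phi> a) * \<phi> a')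
           = ((\<phi> a * cnj (\<phi> a)) * (\<phi> a' * cnj (\<phi> a'))) * (\<chi> b * cnj (\<chi> b'))"
          by (simp add: mult_ac)
        show "\<psi> (glue \<gamma> a b) * cnj (\<psi> (glue \<gamma> a' b')) * cnj (eN (glue \<gamma> a b) (glue \<gamma> a' b'))
           = (of_real (w a * w a') * (\<chi> b * cnj (\<chi> b'))) * (if b = b' then 1 else 0)"
        proof (cases "b = b'")
          case True
          have "\<psi> (glue \<gamma> a b) * cnj (\<psi> (glue \<gamma> a' b')) * cnj (eN (glue \<gamma> a b) (glue \<gamma> a' b'))
              = (\<phi> a * cnj (\<phi> a)) * (\<phi> a' * cnj (\<phi> a')) * (\<chi> b * cnj (\<chi> b'))"
            unfolding eNg[OF a b a' b'] psig[OF a b] psig[OF a' b'] using True by (simp add: mult_ac)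
          then show ?thesis using True by (simp add: wa)
        next
          case False
          then show ?thesis unfolding eNg[OF a b a' b'] by simp
        qed
      qed
      also have "\<dots> = of_real (w a * w a') * (\<chi> b * cnj (\<chi> b))"
        by (rule sum_collapse[OF _ b]) simp
      also have "\<dots> = of_real (w a * w a' * u b)"
        by (simp add: ub)
      finally show "(\<Sum>b'\<in>?B. \<psi> (glue \<gamma> a b) * cnj (\<psi> (glue \<gamma> a' b')) * cnj (eN (glue \<gamma> a b) (glue \<gamma> a' b')))
          = of_real (w a * w a' * u b)" .
    qed
    also have "\<dots> = of_real (\<Sum>a\<in>?A. \<Sum>b\<in>?B. \<Sum>a'\<in>?A. w a * w a' * u b)"
      by simp
    also have "(\<Sum>a\<in>?A. \<Sum>b\<in>?B. \<Sum>a'\<in>?A. w a * w a' * u b) = (\<Sum>a\<in>?A. \<Sum>a'\<in>?A. \<Sum>b\<in>?B. w a * w a' * u b)"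
      by (rule sum.cong[OF refl], rule sum.swap)
    also have "\<dots> = nphi^2 * nchi"
      unfolding nphi_w nchi_u power2_eq_square[of "sum _ _"]
      by (simp add: sum_distrib_left sum_distrib_right mult_ac)
    finally show ?thesis .
  qed
  have vS: "(\<Sum>p\<in>X. v p * EE lam ?N (ext \<alpha> i) (snd p) (fst p)) = Tf d n lam (\<lambda>x y. \<psi> x * cnj (\<psi> y)) \<alpha> i"
    for \<alpha> i
    unfolding X_def sum_pair v_def Tf_def by simp
  have vv: "(\<Sum>p\<in>X. (cmod (v p))^2) = 1"
  proof -
    have "(\<Sum>p\<in>X. (cmod (v p))^2) = (\<Sum>x\<in>?C. \<Sum>y\<in>?C. (cmod (\<psi> x))^2 * (cmod (\<psi> y))^2)"
      unfolding X_def sum_pair v_def by (simp add: norm_mult power_mult_distrib)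
    also have "\<dots> = (\<Sum>x\<in>?C. (cmod (\<psi> x))^2) * (\<Sum>y\<in>?C. (cmod (\<psi> y))^2)"
      by (simp add: sum_product)
    finally show ?thesis using nrm by simp
  qed
  have fX: "finite X" unfolding X_def by simp
  have fI: "finite I" unfolding I_def using fIdx by simp
  have bes: "(\<Sum>q\<in>I. (cmod (\<Sum>p\<in>X. v p * cnj (e q p)))^2 / c q) \<le> (\<Sum>p\<in>X. (cmod (v p))^2)"
  proof (rule bessel[OF fX fI])
    fix q1 q2 assume q1: "q1 \<in> I" and q2: "q2 \<in> I" and ne: "q1 \<noteq> q2"
    show "(\<Sum>p\<in>X. e q1 p * cnj (e q2 p)) = 0"
    proof (cases q1)
      case None
      then obtain ai where o2s: "q2 = Some ai" and ai: "ai \<in> Idx" using ne q2 unfolding I_def by auto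
      obtain \<alpha> i where aie: "ai = (\<alpha>, i)" by fastforce
      obtain k0 where "k0 \<in> ?N - \<gamma>" "ext \<alpha> i k0 \<noteq> 0" "ext \<alpha> i k0 < d^2"
        using idx(3)[of \<alpha> i] ai aie by auto
      note z = Z[of k0 "ext \<alpha> i", OF this]
      have "(\<Sum>p\<in>X. e q1 p * cnj (e q2 p)) = (\<Sum>x\<in>?C. \<Sum>y\<in>?C. EE lam ?N (ext \<alpha> i) y x * eN x y)"
        unfolding X_def sum_pair e_def None o2s aie by (simp add: mult.commute)
      then show ?thesis using z by simp
    next
      case (Some ai)
      then have ai: "ai \<in> Idx" using q1 unfolding I_def by auto
      obtain \<alpha> i where aie: "ai = (\<alpha>, i)" by fastforce
      show ?thesis
      proof (cases q2)
        case None
        obtain k0 where "k0 \<in> ?N - \<gamma>" "ext \<alpha> i k0 \<noteq> 0" "ext \<alpha> i k0 < d^2"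
          using idx(3)[of \<alpha> i] ai aie by auto
        note z = Z[of k0 "ext \<alpha> i", OF this]
        have "(\<Sum>p\<in>X. e q1 p * cnj (e q2 p)) = cnj (\<Sum>x\<in>?C. \<Sum>y\<in>?C. EE lam ?N (ext \<alpha> i) y x * eN x y)"
          unfolding X_def sum_pair e_def None Some aie by simp
        then show ?thesis using z by simp
      next
        case (Some bi)
        then have bi: "bi \<in> Idx" using q2 unfolding I_def by auto
        obtain \<alpha>' i' where bie: "bi = (\<alpha>', i')" by fastforce
        have neq: "\<not> (\<forall>k\<in>?N. ext \<alpha> i k = ext \<alpha>' i' k)"
        proof
          assume "\<forall>k\<in>?N. ext \<alpha> i k = ext \<alpha>' i' k"
          then have "\<alpha> = \<alpha>' \<and> i = i'"
            using ext_inj[OF idx(1)[of \<alpha> i] idx(1)[of \<alpha>' i'] idx(2)[of \<alpha> i] idx(2)[of \<alpha>' i']]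
              ai bi aie bie by auto
          then show False using ne \<open>q1 = Some ai\<close> Some aie bie by simp
        qed
        have "(\<Sum>p\<in>X. e q1 p * cnj (e q2 p)) = (\<Sum>x\<in>?C. \<Sum>y\<in>?C. cnj (EE lam ?N (ext \<alpha> i) y x) * EE lam ?N (ext \<alpha>' i') y x)"
          unfolding X_def sum_pair e_def Some \<open>q1 = Some ai\<close> aie bie by simp
        also have "\<dots> = 0"
          using EE_orth[OF lb fN, of "ext \<alpha> i" "ext \<alpha>' i'"] ext_range[OF idx(2)[of \<alpha> i] d0]
            ext_range[OF idx(2)[of \<alpha>' i'] d0] ai bi aie bie neq by auto
        finally show ?thesis .
      qed
    qed
  next
    fix q1 assume q1: "q1 \<in> I"
    show "(\<Sum>p\<in>X. e q1 p * cnj (e q1 p)) = of_real (c q1)"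
    proof (cases q1)
      case None
      then show ?thesis unfolding e_def c_def using nN by simp
    next
      case (Some ai)
      then have ai: "ai \<in> Idx" using q1 unfolding I_def by auto
      obtain \<alpha> i where aie: "ai = (\<alpha>, i)" by fastforce
      have "(\<Sum>p\<in>X. e q1 p * cnj (e q1 p)) = (\<Sum>x\<in>?C. \<Sum>y\<in>?C. cnj (EE lam ?N (ext \<alpha> i) y x) * EE lam ?N (ext \<alpha> i) y x)"
        unfolding X_def sum_pair e_def Some aie by simp
      also have "\<dots> = of_nat d ^ n"
        using EE_orth[OF lb fN, of "ext \<alpha> i" "ext \<alpha> i"] ext_range[OF idx(2)[of \<alpha> i] d0] ai aie by auto
      finally show ?thesis unfolding c_def Some by simp
    qed
  next
    fix q1 assume "q1 \<in> I"
    show "c q1 > 0" unfolding c_def using d0 nphi_pos by (cases q1) auto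
  qed
  define T where "T = (\<Sum>ai\<in>Idx. (cmod (Tf d n lam (\<lambda>x y. \<psi> x * cnj (\<psi> y)) (fst ai) (snd ai)))^2)"
  have "(\<Sum>q\<in>I. (cmod (\<Sum>p\<in>X. v p * cnj (e q p)))^2 / c q)
      = (nphi^2 * nchi)^2 / (nphi^2 * real d ^ m) + (\<Sum>ai\<in>Idx. (cmod (\<Sum>p\<in>X. v p * cnj (e (Some ai) p)))^2 / c (Some ai))"
  proof -
    have vN': "cmod (\<Sum>p\<in>X. v p * cnj (eN (fst p) (snd p))) = nphi^2 * nchi"
      unfolding vN norm_of_real using nphi_ge nchi_ge by simp
    show ?thesis unfolding I_def using fIdx
      by (simp add: sum.reindex e_def c_def vN')
  qed
  also have "(\<Sum>ai\<in>Idx. (cmod (\<Sum>p\<in>X. v p * cnj (e (Some ai) p)))^2 / c (Some ai)) = T / real d ^ n"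
    unfolding T_def c_def e_def by (simp add: vS sum_divide_distrib case_prod_beta)
  also have "(nphi^2 * nchi)^2 / (nphi^2 * real d ^ m) = 1 / real d ^ m"
  proof -
    have "(nphi^2 * nchi)^2 = nphi^2 * (nphi * nchi)^2" by (simp add: power2_eq_square mult_ac)
    then show ?thesis using nn nphi_pos by simp
  qed
  finally have "1 / real d ^ m + T / real d ^ n \<le> 1" using bes vv by simp
  then have "T \<le> real d ^ n * (1 - 1 / real d ^ m)" using d0 by (simp add: field_simps)
  also have "\<dots> = real d ^ n - real d ^ card \<gamma>"
  proof -
    have "real d ^ n = real d ^ card \<gamma> * real d ^ m" using km by (metis power_add)
    then show ?thesis using d0 by (simp add: field_simps)
  qed
  also have "\<dots> \<le> real d ^ n - real d"
  proof -
    have "real d ^ 1 \<le> real d ^ card \<gamma>" using g1 d2 by (intro power_increasing) auto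
    then show ?thesis by simp
  qed
  finally have Tb: "T \<le> real d ^ n - real d" .
  have "T = (\<Sum>\<alpha>\<in>Sset n. \<Sum>i\<in>PiE \<alpha> (\<lambda>_. {1..<d^2}). (cmod (Tf d n lam (\<lambda>x y. \<psi> x * cnj (\<psi> y)) \<alpha> i))^2)"
    unfolding T_def Idx_def by (subst sum.Sigma[OF finite_Sset]) (auto simp: finite_PiE_S[simplified] case_prod_beta)
  then show ?thesis using Tb by simp
qed

lemma jensen_sq:
  fixes p r :: "nat \<Rightarrow> real"
  assumes p: "\<And>j. j \<in> J \<Longrightarrow> p j \<ge> 0" and s: "sum p J = 1" and f: "finite J"
  shows "(\<Sum>j\<in>J. p j * r j)^2 \<le> (\<Sum>j\<in>J. p j * (r j)^2)"
proof -
  define M where "M = (\<Sum>j\<in>J. p j * r j)"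
  have "0 \<le> (\<Sum>j\<in>J. p j * (r j - M)^2)" using p by (intro sum_nonneg) simp
  also have "\<dots> = (\<Sum>j\<in>J. p j * (r j)^2 - 2 * M * (p j * r j) + M^2 * p j)"
    by (intro sum.cong refl) (simp add: power2_eq_square algebra_simps)
  also have "\<dots> = (\<Sum>j\<in>J. p j * (r j)^2) - 2 * M * M + M^2 * sum p J"
    unfolding M_def by (simp add: sum.distrib sum_subtractf sum_distrib_left)
  also have "\<dots> = (\<Sum>j\<in>J. p j * (r j)^2) - M^2" using s by (simp add: power2_eq_square)
  finally show ?thesis unfolding M_def by simp
qed

lemma Tf_mix:
  assumes "\<And>x y. x \<in> configs d {..<n} \<Longrightarrow> y \<in> configs d {..<n} \<Longrightarrow>
      \<rho> x y = (\<Sum>j<m. complex_of_real (p j) * \<psi> j x * cnj (\<psi> j y))"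
  shows "Tf d n lam \<rho> \<alpha> i = (\<Sum>j<m. complex_of_real (p j) * Tf d n lam (\<lambda>x y. \<psi> j x * cnj (\<psi> j y)) \<alpha> i)"
proof -
  have "Tf d n lam \<rho> \<alpha> i = (\<Sum>x\<in>configs d {..<n}. \<Sum>y\<in>configs d {..<n}. \<Sum>j<m.
      complex_of_real (p j) * (\<psi> j x * cnj (\<psi> j y) * EE lam {..<n} (ext \<alpha> i) y x))"
    unfolding Tf_def using assms by (intro sum.cong refl) (simp add: sum_distrib_left sum_distrib_right mult_ac)
  also have "\<dots> = (\<Sum>j<m. complex_of_real (p j) * (\<Sum>x\<in>configs d {..<n}. \<Sum>y\<in>configs d {..<n}.
      \<psi> j x * cnj (\<psi> j y) * EE lam {..<n} (ext \<alpha> i) y x))"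
    by (simp add: sum_distrib_left sum.swap[of _ "{..<m}"])
  finally show ?thesis unfolding Tf_def .
qed

theorem corollary1:
  fixes d n :: nat and lam :: "nat \<Rightarrow> lmat" and \<rho> :: op
  assumes "n \<ge> 2" and "d \<ge> 2"
    and "local_basis d lam"
    and "biseparable d n \<rho>"
  shows "corr_C d n lam (real n / 2 + 1) \<rho> \<le> real d ^ n - real d"
proof -
  note lb = assms(3) and d2 = assms(2)
  let ?N = "{..<n}"
  from assms(4) show ?thesis unfolding biseparable_def
  proof (elim exE conjE)
  fix m :: nat and p :: "nat \<Rightarrow> real" and \<psi> \<phi> \<chi> :: "nat \<Rightarrow> cfg \<Rightarrow> complex" and \<beta> :: "nat \<Rightarrow> nat set"
  assume p0: "\<forall>j<m. p j \<ge> 0" and p1: "(\<Sum>j<m. p j) = 1" and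
    nrm: "\<forall>j<m. (\<Sum>x\<in>configs d ?N. (cmod (\<psi> j x))^2) = 1" and
    bet: "\<forall>j<m. \<beta> j \<subseteq> ?N \<and> \<beta> j \<noteq> {} \<and> \<beta> j \<noteq> ?N \<and>
           (\<forall>x\<in>configs d ?N. \<psi> j x = \<phi> j (restrict x (\<beta> j)) * \<chi> j (restrict x (?N - \<beta> j)))" and
    rho: "\<forall>x\<in>configs d ?N. \<forall>y\<in>configs d ?N. \<rho> x y = (\<Sum>j<m. complex_of_real (p j) * \<psi> j x * cnj (\<psi> j y))"
  define F where "F j = (\<lambda>x y. \<psi> j x * cnj (\<psi> j y))" for j
  define Q where "Q j = (\<Sum>\<alpha>\<in>Sset n. \<Sum>i\<in>PiE \<alpha> (\<lambda>_. {1..<d^2}). (Re (Tf d n lam (F j) \<alpha> i))^2)" for j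
  have pure: "Q j \<le> real d ^ n - real d" if j: "j < m" for j
  proof -
    have "Q j \<le> (\<Sum>\<alpha>\<in>Sset n. \<Sum>i\<in>PiE \<alpha> (\<lambda>_. {1..<d^2}). (cmod (Tf d n lam (F j) \<alpha> i))^2)"
      unfolding Q_def by (intro sum_mono) (simp add: abs_Re_le_cmod power_mono abs_le_square_iff[symmetric])
    also have "\<dots> \<le> real d ^ n - real d"
    proof (cases "real (card (\<beta> j)) < real n / 2 + 1")
      case True
      show ?thesis unfolding F_def
        by (rule pure_bound[OF lb d2, of "\<beta> j" n \<psi> "\<phi> j" "\<chi> j" for \<psi>])
           (use bet nrm j True in auto)
    next
      case False
      have bN: "\<beta> j \<subseteq> ?N" and bne: "\<beta> j \<noteq> ?N" using bet j by auto
      have dd: "?N - (?N - \<beta> j) = \<beta> j" using bN by auto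
      have cardc: "card (?N - \<beta> j) = n - card (\<beta> j)"
        using card_Diff_subset[OF finite_subset[OF bN] bN] by simp
      have "card (\<beta> j) \<le> n" using card_mono[OF _ bN] by simp
      then have cg: "real (card (?N - \<beta> j)) < real n / 2 + 1" using False cardc by simp
      have gne: "?N - \<beta> j \<noteq> {}" using bN bne by auto
      show ?thesis unfolding F_def
        by (rule pure_bound[OF lb d2 _ gne cg, of _ "\<chi> j" "\<phi> j"])
           (use bet nrm j dd in \<open>auto simp: mult.commute\<close>)
    qed
    finally show ?thesis .
  qed
  have "corr_C d n lam (real n / 2 + 1) \<rho>
      = (\<Sum>\<alpha>\<in>Sset n. \<Sum>i\<in>PiE \<alpha> (\<lambda>_. {1..<d^2}). (Re (Tf d n lam \<rho> \<alpha> i))^2)"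
    unfolding corr_C_def Sset_def tau_sq_def using trace_eq by (intro sum.cong refl) auto
  also have "\<dots> = (\<Sum>\<alpha>\<in>Sset n. \<Sum>i\<in>PiE \<alpha> (\<lambda>_. {1..<d^2}). (\<Sum>j<m. p j * Re (Tf d n lam (F j) \<alpha> i))^2)"
  proof (intro sum.cong refl)
    fix \<alpha> i
    have "Tf d n lam \<rho> \<alpha> i = (\<Sum>j<m. complex_of_real (p j) * Tf d n lam (F j) \<alpha> i)"
      unfolding F_def by (rule Tf_mix) (use rho in auto)
    then show "(Re (Tf d n lam \<rho> \<alpha> i))^2 = (\<Sum>j<m. p j * Re (Tf d n lam (F j) \<alpha> i))^2"
      by simp
  qed
  also have "\<dots> \<le> (\<Sum>\<alpha>\<in>Sset n. \<Sum>i\<in>PiE \<alpha> (\<lambda>_. {1..<d^2}). \<Sum>j<m. p j * (Re (Tf d n lam (F j) \<alpha> i))^2)"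
  proof (intro sum_mono)
    fix \<alpha> i
    show "(\<Sum>j<m. p j * Re (Tf d n lam (F j) \<alpha> i))^2 \<le> (\<Sum>j<m. p j * (Re (Tf d n lam (F j) \<alpha> i))^2)"
      by (rule jensen_sq[where J="{..<m}" and p=p and r="\<lambda>j. Re (Tf d n lam (F j) \<alpha> i)"]) (use p0 p1 in auto)
  qed
  also have "\<dots> = (\<Sum>j<m. p j * Q j)"
    unfolding Q_def by (simp add: sum_distrib_left sum.swap[of _ "{..<m}"])
  also have "\<dots> \<le> (\<Sum>j<m. p j * (real d ^ n - real d))"
    using p0 pure by (intro sum_mono mult_left_mono) auto
  also have "\<dots> = real d ^ n - real d" using p1 by (simp add: sum_distrib_right[symmetric])
  finally show ?thesis .
  qed
qed

end
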